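(* For every positive integer $n$, the rank-width of the $n\times n$ comparability grid is at least $n/4$.
   Context: The $n\times n$ comparability grid is the simple graph with vertex set $\{1,\dots,n\}^2$ in which distinct $(i,j),(i',j')$ are adjacent iff ($i\le i'$ and $j\le j'$) or ($i\ge i'$ and $j\ge j'$). For $X\subseteq V(G)$, the cut-rank $r(X)$ is the $\mathrm{GF}(2)$-rank of the submatrix of the adjacency matrix with rows $X$ and columns $V(G)\setminus X$. A rank-decomposition of $G$ is a tree $T$ all of whose vertices have degree $1$ or $3$, together with a bijection between the leaves of $T$ and $V(G)$; each edge $e$ of $T$ splits the leaves, hence $V(G)$, into two parts $(X_e,Y_e)$, and the width of $e$ is $r(X_e)$. The width of the decomposition is the maximum width of its edges, and the rank-width $rw(G)$ is the minimum width over all rank-decompositions of $G$. *)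

theory Defs
  imports Main "HOL-Library.Extended_Nat"
begin

text \<open>Simple graphs are given by a vertex set V and a symmetric irreflexive adjacency
  relation adj.\<close>

definition comp_grid_adj :: "nat \<times> nat \<Rightarrow> nat \<times> nat \<Rightarrow> bool" where
  "comp_grid_adj p q \<longleftrightarrow> p \<noteq> q \<and>
     ((fst p \<le> fst q \<and> snd p \<le> snd q) \<or> (fst p \<ge> fst q \<and> snd p \<ge> snd q))"

definition comp_grid_V :: "nat \<Rightarrow> (nat \<times> nat) set" where
  "comp_grid_V n = {1..n} \<times> {1..n}"

text \<open>GF(2) linear independence of the rows indexed by R of the 0/1 matrix with
  entries adj x y (x in R, y in Y): no nonempty subset of rows sums to zero over GF(2),
  i.e. for each nonempty subset S there is a column y with an odd number of ones in S.\<close>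
definition gf2_rows_indep :: "('v \<Rightarrow> 'v \<Rightarrow> bool) \<Rightarrow> 'v set \<Rightarrow> 'v set \<Rightarrow> bool" where
  "gf2_rows_indep adj R Y \<longleftrightarrow>
     (\<forall>S. S \<subseteq> R \<and> S \<noteq> {} \<longrightarrow> (\<exists>y\<in>Y. odd (card {x\<in>S. adj x y})))"

definition gf2_rank :: "('v \<Rightarrow> 'v \<Rightarrow> bool) \<Rightarrow> 'v set \<Rightarrow> 'v set \<Rightarrow> nat" where
  "gf2_rank adj X Y = Max {card R | R. R \<subseteq> X \<and> finite R \<and> gf2_rows_indep adj R Y}"

definition cut_rank :: "'v set \<Rightarrow> ('v \<Rightarrow> 'v \<Rightarrow> bool) \<Rightarrow> 'v set \<Rightarrow> nat" where
  "cut_rank V adj X = gf2_rank adj X (V - X)"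

definition reach :: "nat set set \<Rightarrow> nat \<Rightarrow> nat \<Rightarrow> bool" where
  "reach E u v \<longleftrightarrow> (u, v) \<in> {(a, b). {a, b} \<in> E}\<^sup>*"

definition is_tree :: "nat set \<Rightarrow> nat set set \<Rightarrow> bool" where
  "is_tree TV TE \<longleftrightarrow> finite TV \<and> TV \<noteq> {} \<and>
     (\<forall>e\<in>TE. \<exists>u v. e = {u, v} \<and> u \<noteq> v \<and> u \<in> TV \<and> v \<in> TV) \<and>
     (\<forall>u\<in>TV. \<forall>v\<in>TV. reach TE u v) \<and>
     \<comment> \<open>acyclic: no edge lies on a cycle\<close>
     (\<forall>u v. {u, v} \<in> TE \<longrightarrow> \<not> reach (TE - {{u, v}}) u v)"

definition tdeg :: "nat set set \<Rightarrow> nat \<Rightarrow> nat" where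
  "tdeg TE t = card {e\<in>TE. t \<in> e}"

definition leaves :: "nat set \<Rightarrow> nat set set \<Rightarrow> nat set" where
  "leaves TV TE = {t\<in>TV. tdeg TE t = 1}"

definition rank_decomp :: "'v set \<Rightarrow> nat set \<Rightarrow> nat set set \<Rightarrow> (nat \<Rightarrow> 'v) \<Rightarrow> bool" where
  "rank_decomp V TV TE f \<longleftrightarrow> is_tree TV TE \<and>
     (\<forall>t\<in>TV. tdeg TE t = 1 \<or> tdeg TE t = 3) \<and>
     bij_betw f (leaves TV TE) V"

definition edge_width :: "'v set \<Rightarrow> ('v \<Rightarrow> 'v \<Rightarrow> bool) \<Rightarrow> nat set \<Rightarrow> nat set set \<Rightarrow> (nat \<Rightarrow> 'v)
    \<Rightarrow> nat \<Rightarrow> nat \<Rightarrow> nat" where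
  "edge_width V adj TV TE f u v =
     cut_rank V adj (f ` {l \<in> leaves TV TE. reach (TE - {{u, v}}) u l})"

definition decomp_width :: "'v set \<Rightarrow> ('v \<Rightarrow> 'v \<Rightarrow> bool) \<Rightarrow> nat set \<Rightarrow> nat set set
    \<Rightarrow> (nat \<Rightarrow> 'v) \<Rightarrow> nat" where
  "decomp_width V adj TV TE f = Max {edge_width V adj TV TE f u v | u v. {u, v} \<in> TE}"

text \<open>Rank-width: minimum width over all rank-decompositions (infinity if there is none).\<close>
definition rank_width :: "'v set \<Rightarrow> ('v \<Rightarrow> 'v \<Rightarrow> bool) \<Rightarrow> enat" where
  "rank_width V adj =
     (INF d \<in> {(TV, TE, f). rank_decomp V TV TE f}.
        enat (case d of (TV, TE, f) \<Rightarrow> decomp_width V adj TV TE f))"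

end

theory Submission
  imports Defs
begin


lemma reach_refl[simp]: "reach E u u" by (simp add: reach_def)

lemma reach_step: "reach E u x \<Longrightarrow> {x,y} \<in> E \<Longrightarrow> reach E u y"
  unfolding reach_def by (erule rtrancl_into_rtrancl) auto

lemma reach_edge: "{x,y} \<in> E \<Longrightarrow> reach E x y"
  using reach_step[of E x x y] by simp

lemma reach_mono: "reach E u x \<Longrightarrow> E \<subseteq> E' \<Longrightarrow> reach E' u x"
  unfolding reach_def by (erule rtrancl_mono[THEN subsetD, rotated]) auto

lemma reach_induct[consumes 1, case_names refl step]:
  assumes "reach E a x" "P a"
    "\<And>x y. reach E a x \<Longrightarrow> {x,y} \<in> E \<Longrightarrow> P x \<Longrightarrow> P y"
  shows "P x"
  using assms(1) unfolding reach_def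
proof (induction rule: rtrancl_induct)
  case base then show ?case using assms(2) by simp
next
  case (step y z) then show ?case using assms(3)[of y z] unfolding reach_def by auto
qed

lemma reach_del:
  assumes "reach E a x"
  shows "reach (E - {{p,q}}) a x \<or> reach (E - {{p,q}}) a p \<or> reach (E - {{p,q}}) a q"
  using assms
proof (induction rule: reach_induct)
  case refl then show ?case by simp
next
  case (step x y)
  show ?case
  proof (cases "{x,y} = {p,q}")
    case True
    then have "x = p \<or> x = q" by (metis doubleton_eq_iff)
    then show ?thesis using step.IH by (metis reach_step DiffI singletonD)
  next
    case False
    then show ?thesis using step by (metis reach_step DiffI singletonD)
  qed
qed

lemma reach_cover:
  assumes "reach E a x" "a = p \<or> a = q"
  shows "reach (E - {{p,q}}) p x \<or> reach (E - {{p,q}}) q x"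
  using assms
proof (induction rule: reach_induct)
  case refl then show ?case by auto
next
  case (step x y)
  show ?case
  proof (cases "{x,y} = {p,q}")
    case True
    then have "y = p \<or> y = q" by (metis doubleton_eq_iff)
    then show ?thesis by auto
  next
    case False
    then show ?thesis using step by (metis reach_step DiffI singletonD)
  qed
qed

lemma reach_in:
  assumes "reach E u x" "E \<subseteq> TE" "\<forall>e\<in>TE. e \<subseteq> TV" "u \<in> TV"
  shows "x \<in> TV"
  using assms
  by (induction rule: reach_induct) blast+

definition side :: "nat set set \<Rightarrow> nat \<Rightarrow> nat \<Rightarrow> nat set" where
  "side E u v = {x. reach (E - {{u,v}}) u x}"

definition lside :: "nat set \<Rightarrow> nat set set \<Rightarrow> nat \<Rightarrow> nat \<Rightarrow> nat set" where
  "lside TV TE u v = {l \<in> leaves TV TE. reach (TE - {{u, v}}) u l}"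

context
  fixes TV :: "nat set" and TE :: "nat set set"
  assumes tree: "is_tree TV TE"
  and degs: "\<forall>t\<in>TV. tdeg TE t = 1 \<or> tdeg TE t = 3"
begin

lemma edges: "e \<in> TE \<Longrightarrow> \<exists>u v. e = {u, v} \<and> u \<noteq> v \<and> u \<in> TV \<and> v \<in> TV"
  using tree unfolding is_tree_def by blast

lemma acyc: "{u,v} \<in> TE \<Longrightarrow> \<not> reach (TE - {{u, v}}) u v"
  using tree unfolding is_tree_def by blast

lemma finTV: "finite TV" using tree unfolding is_tree_def by blast

lemma edges_sub: "\<forall>e\<in>TE. e \<subseteq> TV" using edges by blast

lemma edge_in: "{u,v} \<in> TE \<Longrightarrow> u \<in> TV \<and> v \<in> TV"
  using edges_sub by blast

lemma finTE: "finite TE"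
proof -
  have "TE \<subseteq> Pow TV" using edges_sub by blast
  then show ?thesis using finTV by (meson finite_Pow_iff finite_subset)
qed

lemma edge_other: "e \<in> TE \<Longrightarrow> u \<in> e \<Longrightarrow> \<exists>w. e = {u,w} \<and> w \<noteq> u"
  using edges by (metis insert_commute insert_iff singletonD)

lemma side_fin: "{u,v} \<in> TE \<Longrightarrow> finite (side TE u v)"
proof -
  assume a: "{u,v} \<in> TE"
  have "side TE u v \<subseteq> TV"
    using reach_in[of "TE - {{u,v}}" u _ TE TV] edges_sub edge_in[OF a]
    unfolding side_def by blast
  then show ?thesis using finTV finite_subset by blast
qed

lemma leaf_side:
  assumes "tdeg TE u = 1" "{u,v} \<in> TE" "reach (TE - {{u,v}}) u x"
  shows "x = u"
proof -
  have S: "{e\<in>TE. u \<in> e} = {{u,v}}"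
  proof -
    have "card {e\<in>TE. u \<in> e} = 1" using assms(1) unfolding tdeg_def .
    then obtain e where "{e\<in>TE. u \<in> e} = {e}" by (meson card_1_singletonE)
    moreover have "{u,v} \<in> {e\<in>TE. u \<in> e}" using assms(2) by simp
    ultimately show ?thesis by auto
  qed
  show ?thesis using assms(3)
  proof (induction rule: reach_induct)
    case refl then show ?case by simp
  next
    case (step x y)
    then have "{u,y} \<in> {e\<in>TE. u \<in> e}" by auto
    then have "{u,y} = {u,v}" using S by auto
    then show ?case using step by auto
  qed
qed

lemma deg3:
  assumes "tdeg TE u = 3" "{u,v} \<in> TE"
  shows "\<exists>w1 w2. {u,w1} \<in> TE \<and> {u,w2} \<in> TE \<and> w1 \<noteq> v \<and> w2 \<noteq> v \<and> w1 \<noteq> w2 \<and>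
     (\<forall>e\<in>TE. u \<in> e \<longrightarrow> e = {u,v} \<or> e = {u,w1} \<or> e = {u,w2})"
proof -
  let ?S = "{e\<in>TE. u \<in> e}"
  have c3: "card ?S = 3" using assms(1) unfolding tdeg_def .
  have fS: "finite ?S" using finTE by simp
  have "card (?S - {{u,v}}) = 2" using c3 assms(2) fS by (simp add: card_Diff_singleton)
  then obtain e1 e2 where e12: "?S - {{u,v}} = {e1,e2}" "e1 \<noteq> e2" by (meson card_2_iff)
  have "e1 \<in> TE" "u \<in> e1" "e1 \<noteq> {u,v}" using e12 by blast+
  then obtain w1 where w1: "e1 = {u,w1}" "w1 \<noteq> u" using edge_other by blast
  have "e2 \<in> TE" "u \<in> e2" "e2 \<noteq> {u,v}" using e12 by blast+
  then obtain w2 where w2: "e2 = {u,w2}" "w2 \<noteq> u" using edge_other by blast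
  have "{u,w1} \<in> TE" "{u,w2} \<in> TE" using e12 w1 w2 by blast+
  moreover have "w1 \<noteq> v" "w2 \<noteq> v" "w1 \<noteq> w2" using e12 w1 w2 by auto
  moreover have "\<forall>e\<in>TE. u \<in> e \<longrightarrow> e = {u,v} \<or> e = {u,w1} \<or> e = {u,w2}"
    using e12 w1 w2 by blast
  ultimately show ?thesis by blast
qed

lemma deg3_side:
  assumes "{u,v} \<in> TE" "{u,w1} \<in> TE" "{u,w2} \<in> TE"
    "\<forall>e\<in>TE. u \<in> e \<longrightarrow> e = {u,v} \<or> e = {u,w1} \<or> e = {u,w2}"
    "reach (TE - {{u,v}}) u x"
  shows "x = u \<or> reach (TE - {{w1,u}}) w1 x \<or> reach (TE - {{w2,u}}) w2 x"
  using assms(5)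
proof (induction rule: reach_induct)
  case refl then show ?case by simp
next
  case (step x y)
  have ac1: "\<not> reach (TE - {{w1,u}}) w1 u" using acyc assms(2) by (metis insert_commute)
  have ac2: "\<not> reach (TE - {{w2,u}}) w2 u" using acyc assms(3) by (metis insert_commute)
  from step.IH show ?case
  proof (elim disjE)
    assume "x = u"
    then have "{u,y} \<in> TE" "{u,y} \<noteq> {u,v}" using step.hyps by auto
    then have d: "{u,y} = {u,v} \<or> {u,y} = {u,w1} \<or> {u,y} = {u,w2}"
      using assms(4)[rule_format, OF \<open>{u,y} \<in> TE\<close> insertI1] by blast
    then have "y = w1 \<or> y = w2" using \<open>{u,y} \<noteq> {u,v}\<close> by (auto simp: doubleton_eq_iff)
    then show ?thesis by auto
  next
    assume r: "reach (TE - {{w1,u}}) w1 x"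
    show ?thesis
    proof (cases "{x,y} = {w1,u}")
      case True
      then have "x = w1 \<and> y = u \<or> x = u \<and> y = w1" by (metis doubleton_eq_iff)
      then show ?thesis using r ac1 by auto
    next
      case False
      then have "{x,y} \<in> TE - {{w1,u}}" using step.hyps(2) by blast
      from reach_step[OF r this] show ?thesis by blast
    qed
  next
    assume r: "reach (TE - {{w2,u}}) w2 x"
    show ?thesis
    proof (cases "{x,y} = {w2,u}")
      case True
      then have "x = w2 \<and> y = u \<or> x = u \<and> y = w2" by (metis doubleton_eq_iff)
      then show ?thesis using r ac2 by auto
    next
      case False
      then have "{x,y} \<in> TE - {{w2,u}}" using step.hyps(2) by blast
      from reach_step[OF r this] show ?thesis by blast
    qed
  qed
qed

lemma sub_side:
  assumes "{u,v} \<in> TE" "{u,w} \<in> TE" "w \<noteq> v"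
  shows "side TE w u \<subset> side TE u v"
proof -
  let ?E = "TE - {{w,u}}"
  have ac: "\<not> reach ?E w u" using acyc assms(2) by (metis insert_commute)
  have sub: "reach (TE - {{u,v}}) u x" if r: "reach ?E w x" for x
  proof -
    from reach_del[OF r, of u v]
    have "reach (?E - {{u,v}}) w x \<or> reach (?E - {{u,v}}) w u \<or> reach (?E - {{u,v}}) w v" .
    then show ?thesis
    proof (elim disjE)
      assume "reach (?E - {{u,v}}) w x"
      then have "reach (TE - {{u,v}}) w x" by (rule reach_mono) blast
      moreover have "{u,w} \<in> TE - {{u,v}}" using assms by (auto simp: doubleton_eq_iff)
      then have "reach (TE - {{u,v}}) u w" by (rule reach_edge)
      ultimately show ?thesis unfolding reach_def by (meson rtrancl_trans)
    next
      assume "reach (?E - {{u,v}}) w u"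
      then have "reach ?E w u" by (rule reach_mono) blast
      then show ?thesis using ac by blast
    next
      assume "reach (?E - {{u,v}}) w v"
      then have "reach ?E w v" by (rule reach_mono) blast
      moreover have "{v,u} \<in> ?E" using assms by (auto simp: doubleton_eq_iff insert_commute)
      ultimately have "reach ?E w u" by (rule reach_step)
      then show ?thesis using ac by blast
    qed
  qed
  have "side TE w u \<subseteq> side TE u v" unfolding side_def using sub by blast
  moreover have "u \<in> side TE u v" "u \<notin> side TE w u" unfolding side_def using ac by auto
  ultimately show ?thesis by blast
qed

lemma lside_sub:
  assumes "{u,v} \<in> TE" "{u,w} \<in> TE" "w \<noteq> v"
  shows "lside TV TE w u \<subseteq> lside TV TE u v"
  using sub_side[OF assms] unfolding side_def lside_def by blast

lemma lside_nonempty: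
  "{u,v} \<in> TE \<Longrightarrow> lside TV TE u v \<noteq> {}"
proof (rule ccontr)
  assume "{u,v} \<in> TE" "\<not> lside TV TE u v \<noteq> {}"
  then have P0: "{fst (u,v), snd (u,v)} \<in> TE \<and> lside TV TE (fst (u,v)) (snd (u,v)) = {}" by auto
  obtain p where p: "{fst p, snd p} \<in> TE \<and> lside TV TE (fst p) (snd p) = {}"
    and mn: "\<forall>q. {fst q, snd q} \<in> TE \<and> lside TV TE (fst q) (snd q) = {}
        \<longrightarrow> card (side TE (fst p) (snd p)) \<le> card (side TE (fst q) (snd q))"
    using ex_has_least_nat[where P = "\<lambda>p. {fst p, snd p} \<in> TE \<and> lside TV TE (fst p) (snd p) = {}",
       OF P0, where m = "\<lambda>p. card (side TE (fst p) (snd p))"] by blast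
  obtain a b where ab: "p = (a,b)" by fastforce
  have e: "{a,b} \<in> TE" and em: "lside TV TE a b = {}" using p ab by auto
  have aT: "a \<in> TV" using edge_in[OF e] by blast
  from degs aT have "tdeg TE a = 1 \<or> tdeg TE a = 3" by blast
  then show False
  proof
    assume "tdeg TE a = 1"
    then have "a \<in> lside TV TE a b" unfolding lside_def leaves_def using aT by simp
    then show False using em by blast
  next
    assume "tdeg TE a = 3"
    from deg3[OF this e] obtain w1 where w1: "{a,w1} \<in> TE" "w1 \<noteq> b" by (elim exE conjE)
    have "lside TV TE w1 a = {}" using lside_sub[OF e w1] em by blast
    moreover have "{w1,a} \<in> TE" using w1 by (simp add: insert_commute)
    ultimately have "card (side TE a b) \<le> card (side TE w1 a)" using mn[rule_format, of "(w1,a)"] ab by simp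
    moreover have "card (side TE w1 a) < card (side TE a b)"
      using sub_side[OF e w1] side_fin[OF e] by (simp add: psubset_card_mono)
    ultimately show False by simp
  qed
qed

lemma finL: "finite (leaves TV TE)"
  using finTV unfolding leaves_def by simp

lemma lside_leaves: "lside TV TE u v \<subseteq> leaves TV TE"
  unfolding lside_def by blast

lemma finLs: "finite (lside TV TE u v)"
  using finL lside_leaves finite_subset by blast

lemma leaf_edge: "tdeg TE l = 1 \<Longrightarrow> \<exists>w. {l,w} \<in> TE"
proof -
  assume "tdeg TE l = 1"
  then have "{e\<in>TE. l \<in> e} \<noteq> {}" unfolding tdeg_def by (metis card.empty zero_neq_one)
  then obtain e where "e \<in> TE" "l \<in> e" by blast
  then show ?thesis using edge_other by blast
qed

lemma cover:
  assumes "{u,v} \<in> TE"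
  shows "leaves TV TE \<subseteq> lside TV TE u v \<union> lside TV TE v u"
proof
  fix l assume l: "l \<in> leaves TV TE"
  then have "l \<in> TV" unfolding leaves_def by blast
  moreover have "u \<in> TV" using edge_in[OF assms] by blast
  ultimately have "reach TE u l" using tree unfolding is_tree_def by blast
  from reach_cover[OF this, of u v]
  have "reach (TE - {{u,v}}) u l \<or> reach (TE - {{u,v}}) v l" by simp
  then show "l \<in> lside TV TE u v \<union> lside TV TE v u"
    using l unfolding lside_def by (auto simp: insert_commute)
qed

lemma deg3_lside:
  assumes "tdeg TE u = 3" "{u,v} \<in> TE" "{u,w1} \<in> TE" "{u,w2} \<in> TE"
    "\<forall>e\<in>TE. u \<in> e \<longrightarrow> e = {u,v} \<or> e = {u,w1} \<or> e = {u,w2}"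
  shows "lside TV TE u v \<subseteq> lside TV TE w1 u \<union> lside TV TE w2 u"
proof
  fix l assume l: "l \<in> lside TV TE u v"
  then have r: "reach (TE - {{u,v}}) u l" and lv: "l \<in> leaves TV TE" unfolding lside_def by auto
  have "l \<noteq> u" using lv assms(1) unfolding leaves_def by auto
  then show "l \<in> lside TV TE w1 u \<union> lside TV TE w2 u"
    using deg3_side[OF assms(2-5) r] lv unfolding lside_def by blast
qed

lemma balanced:
  assumes N: "N = card (leaves TV TE)" "N \<ge> 2"
  shows "\<exists>u v. {u,v} \<in> TE \<and> N \<le> 3 * card (lside TV TE u v)
     \<and> N \<le> 3 * card (leaves TV TE - lside TV TE u v)"
proof -
  let ?P = "\<lambda>p. {fst p, snd p} \<in> TE \<and> N \<le> 3 * card (lside TV TE (fst p) (snd p))"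
  have "leaves TV TE \<noteq> {}" using N by auto
  then obtain l where l: "l \<in> leaves TV TE" by blast
  then have "tdeg TE l = 1" unfolding leaves_def by blast
  then obtain w where lw: "{l,w} \<in> TE" using leaf_edge by blast
  have wl: "{w,l} \<in> TE" using lw by (simp add: insert_commute)
  have "N \<le> card (lside TV TE l w \<union> lside TV TE w l)"
    unfolding N(1) by (rule card_mono) (use cover[OF lw] finL finLs in auto)
  also have "\<dots> \<le> card (lside TV TE l w) + card (lside TV TE w l)" by (rule card_Un_le)
  finally have "?P (l,w) \<or> ?P (w,l)" using lw wl by auto
  then obtain p0 where P0: "?P p0" by blast
  obtain p where p: "?P p"
    and mn: "\<forall>q. ?P q \<longrightarrow> card (side TE (fst p) (snd p)) \<le> card (side TE (fst q) (snd q))"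
    using ex_has_least_nat[where P = ?P, OF P0, where m = "\<lambda>p. card (side TE (fst p) (snd p))"]
    by blast
  obtain a b where ab: "p = (a,b)" by fastforce
  have e: "{a,b} \<in> TE" and big: "N \<le> 3 * card (lside TV TE a b)" using p ab by auto
  have cL: "card (leaves TV TE - lside TV TE a b) = N - card (lside TV TE a b)"
    using N(1) card_Diff_subset[OF finLs lside_leaves] by simp
  have cLN: "card (lside TV TE a b) \<le> N"
    using N(1) finL lside_leaves by (simp add: card_mono)
  have "N \<le> 3 * card (leaves TV TE - lside TV TE a b)"
  proof (rule ccontr)
    assume "\<not> ?thesis"
    then have gt: "2 * N < 3 * card (lside TV TE a b)" using cL cLN by linarith
    have aT: "a \<in> TV" using edge_in[OF e] by blast
    from degs aT have "tdeg TE a = 1 \<or> tdeg TE a = 3" by blast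
    then show False
    proof
      assume "tdeg TE a = 1"
      then have "lside TV TE a b \<subseteq> {a}" using leaf_side[OF _ e] unfolding lside_def by blast
      then have "card (lside TV TE a b) \<le> 1" by (simp add: card_mono[of "{a}", simplified])
      then show False using gt N(2) by linarith
    next
      assume d3: "tdeg TE a = 3"
      from deg3[OF this e] obtain w1 w2 where w: "{a,w1} \<in> TE" "{a,w2} \<in> TE" "w1 \<noteq> b" "w2 \<noteq> b"
        "\<forall>e\<in>TE. a \<in> e \<longrightarrow> e = {a,b} \<or> e = {a,w1} \<or> e = {a,w2}" by (elim exE conjE)
      have "card (lside TV TE a b) \<le> card (lside TV TE w1 a \<union> lside TV TE w2 a)"
        by (rule card_mono) (use deg3_lside[OF d3 e w(1,2,5)] finLs in auto)
      also have "\<dots> \<le> card (lside TV TE w1 a) + card (lside TV TE w2 a)" by (rule card_Un_le)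
      finally have sum: "card (lside TV TE a b) \<le> card (lside TV TE w1 a) + card (lside TV TE w2 a)" .
      have "\<exists>w. {a,w} \<in> TE \<and> w \<noteq> b \<and> N \<le> 3 * card (lside TV TE w a)"
      proof (cases "card (lside TV TE w2 a) \<le> card (lside TV TE w1 a)")
        case True
        then have "N \<le> 3 * card (lside TV TE w1 a)" using sum gt by linarith
        then show ?thesis using w by blast
      next
        case False
        then have "N \<le> 3 * card (lside TV TE w2 a)" using sum gt by linarith
        then show ?thesis using w by blast
      qed
      then obtain x where x: "{a,x} \<in> TE" "x \<noteq> b" "N \<le> 3 * card (lside TV TE x a)" by blast
      have "?P (x,a)" using x by (simp add: insert_commute)
      then have "card (side TE a b) \<le> card (side TE x a)" using mn ab by fastforce
      moreover have "card (side TE x a) < card (side TE a b)"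
        using sub_side[OF e x(1,2)] side_fin[OF e] by (simp add: psubset_card_mono)
      ultimately show False by simp
    qed
  qed
  then show ?thesis using e big by blast
qed

lemma not_one_leaf: "card (leaves TV TE) \<noteq> 1"
proof
  assume "card (leaves TV TE) = 1"
  then obtain l where L: "leaves TV TE = {l}" by (meson card_1_singletonE)
  then have "tdeg TE l = 1" unfolding leaves_def by blast
  then obtain w where lw: "{l,w} \<in> TE" using leaf_edge by blast
  have wl: "{w,l} \<in> TE" using lw by (simp add: insert_commute)
  from lside_nonempty[OF wl] obtain x where "x \<in> lside TV TE w l" by blast
  then have "reach (TE - {{w,l}}) w l" using L unfolding lside_def by auto
  then show False using acyc[OF wl] by blast
qed

end


lemma rank_ge:
  assumes "finite X" "R \<subseteq> X" "gf2_rows_indep adj R Y"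
  shows "card R \<le> gf2_rank adj X Y"
proof -
  let ?S = "{card R | R. R \<subseteq> X \<and> finite R \<and> gf2_rows_indep adj R Y}"
  have "?S \<subseteq> {..card X}" using assms(1) by (auto intro: card_mono)
  then have "finite ?S" using finite_subset by blast
  moreover have "card R \<in> ?S" using assms finite_subset by blast
  ultimately show ?thesis unfolding gf2_rank_def by (rule Max_ge)
qed

lemma tri_min:
  fixes x y :: "nat \<Rightarrow> 'v"
  assumes "finite I" "\<forall>i\<in>I. y i \<in> Y" "\<forall>i\<in>I. adj (x i) (y i)"
    "\<forall>s\<in>I. \<forall>t\<in>I. t < s \<longrightarrow> \<not> adj (x s) (y t)"
  shows "gf2_rows_indep adj (x ` I) Y"
  unfolding gf2_rows_indep_def
proof (intro allI impI)
  fix S assume S: "S \<subseteq> x ` I \<and> S \<noteq> {}"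
  let ?T = "{i\<in>I. x i \<in> S}"
  have Tne: "?T \<noteq> {}" using S by blast
  have fT: "finite ?T" using assms(1) by simp
  define t where "t = Min ?T"
  have tT: "t \<in> ?T" unfolding t_def using Tne fT by (rule Min_in[rotated])
  have tmin: "t \<le> s" if "s \<in> ?T" for s unfolding t_def using fT that by simp
  have "{z\<in>S. adj z (y t)} = {x t}"
  proof
    show "{x t} \<subseteq> {z\<in>S. adj z (y t)}" using tT assms(3) by blast
    show "{z\<in>S. adj z (y t)} \<subseteq> {x t}"
    proof
      fix z assume z: "z \<in> {z\<in>S. adj z (y t)}"
      then obtain s where s: "s \<in> I" "z = x s" using S by blast
      then have "s \<in> ?T" using z by blast
      then have "t \<le> s" by (rule tmin)
      show "z \<in> {x t}"
      proof (cases "s = t")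
        case True then show ?thesis using s by simp
      next
        case False
        then have "t < s" using \<open>t \<le> s\<close> by simp
        then have "\<not> adj (x s) (y t)" using assms(4) s tT by blast
        then show ?thesis using z s by simp
      qed
    qed
  qed
  then have "odd (card {z\<in>S. adj z (y t)})" by simp
  moreover have "y t \<in> Y" using assms(2) tT by blast
  ultimately show "\<exists>y\<in>Y. odd (card {x\<in>S. adj x y})" by blast
qed

lemma tri_max:
  fixes x y :: "nat \<Rightarrow> 'v"
  assumes "finite I" "\<forall>i\<in>I. y i \<in> Y" "\<forall>i\<in>I. adj (x i) (y i)"
    "\<forall>s\<in>I. \<forall>t\<in>I. s < t \<longrightarrow> \<not> adj (x s) (y t)"
  shows "gf2_rows_indep adj (x ` I) Y"
  unfolding gf2_rows_indep_def
proof (intro allI impI)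
  fix S assume S: "S \<subseteq> x ` I \<and> S \<noteq> {}"
  let ?T = "{i\<in>I. x i \<in> S}"
  have Tne: "?T \<noteq> {}" using S by blast
  have fT: "finite ?T" using assms(1) by simp
  define t where "t = Max ?T"
  have tT: "t \<in> ?T" unfolding t_def using Tne fT by (rule Max_in[rotated])
  have tmax: "s \<le> t" if "s \<in> ?T" for s unfolding t_def using fT that by simp
  have "{z\<in>S. adj z (y t)} = {x t}"
  proof
    show "{x t} \<subseteq> {z\<in>S. adj z (y t)}" using tT assms(3) by blast
    show "{z\<in>S. adj z (y t)} \<subseteq> {x t}"
    proof
      fix z assume z: "z \<in> {z\<in>S. adj z (y t)}"
      then obtain s where s: "s \<in> I" "z = x s" using S by blast
      then have "s \<in> ?T" using z by blast
      then have "s \<le> t" by (rule tmax)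
      show "z \<in> {x t}"
      proof (cases "s = t")
        case True then show ?thesis using s by simp
      next
        case False
        then have "s < t" using \<open>s \<le> t\<close> by simp
        then have "\<not> adj (x s) (y t)" using assms(4) s tT by blast
        then show ?thesis using z s by simp
      qed
    qed
  qed
  then have "odd (card {z\<in>S. adj z (y t)})" by simp
  moreover have "y t \<in> Y" using assms(2) tT by blast
  ultimately show "\<exists>y\<in>Y. odd (card {x\<in>S. adj x y})" by blast
qed

lemma finV: "finite (comp_grid_V n)" unfolding comp_grid_V_def by simp

lemma rows_case:
  fixes n :: nat and X :: "(nat \<times> nat) set"
  defines "Y \<equiv> comp_grid_V n - X"
  assumes XV: "X \<subseteq> comp_grid_V n"
  defines "MR \<equiv> {i\<in>{1..n}. (\<exists>j\<in>{1..n}. (i,j) \<in> X) \<and> (\<exists>j\<in>{1..n}. (i,j) \<in> Y)}"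
  shows "card MR \<le> 2 * gf2_rank comp_grid_adj X Y"
proof -
  have fX: "finite X" using XV finV finite_subset by blast
  have fMR: "finite MR" unfolding MR_def by simp
  let ?A = "{i\<in>MR. (i,1) \<in> X}"
  let ?B = "{i\<in>MR. (i,1) \<notin> X}"
  have MRAB: "MR = ?A \<union> ?B" by blast
  have cMR: "card MR \<le> card ?A + card ?B" by (subst MRAB) (rule card_Un_le)
  define r where "r i = (SOME j. j \<in> {1..n} \<and> (i,j) \<in> Y)" for i
  have r: "r i \<in> {1..n} \<and> (i, r i) \<in> Y" if "i \<in> MR" for i
    unfolding r_def by (rule someI_ex) (use that MR_def in blast)
  define c where "c i = (SOME j. j \<in> {1..n} \<and> (i,j) \<in> X)" for i
  have c: "c i \<in> {1..n} \<and> (i, c i) \<in> X" if "i \<in> MR" for i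
    unfolding c_def by (rule someI_ex) (use that MR_def in blast)
  have cA: "card ?A \<le> gf2_rank comp_grid_adj X Y"
  proof -
    have "gf2_rows_indep comp_grid_adj ((\<lambda>i. (i,1)) ` ?A) Y"
    proof (rule tri_min[where y = "\<lambda>i. (i, r i)"])
      show "finite ?A" using fMR by simp
      show "\<forall>i\<in>?A. (i, r i) \<in> Y" using r by blast
      show "\<forall>i\<in>?A. comp_grid_adj (i, 1) (i, r i)"
      proof
        fix i assume i: "i \<in> ?A"
        then have "(i, r i) \<in> Y" "r i \<ge> 1" using r by auto
        then have "r i \<noteq> 1" using i unfolding Y_def by auto
        then show "comp_grid_adj (i, 1) (i, r i)" using \<open>r i \<ge> 1\<close> unfolding comp_grid_adj_def by auto
      qed
      show "\<forall>s\<in>?A. \<forall>t\<in>?A. t < s \<longrightarrow> \<not> comp_grid_adj (s, 1) (t, r t)"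
      proof (intro ballI impI)
        fix s t assume st: "s \<in> ?A" "t \<in> ?A" "t < s"
        then have "(t, r t) \<in> Y" "r t \<ge> 1" using r by auto
        then have "r t \<noteq> 1" using st unfolding Y_def by auto
        then show "\<not> comp_grid_adj (s, 1) (t, r t)" using st(3) \<open>r t \<ge> 1\<close>
          unfolding comp_grid_adj_def by auto
      qed
    qed
    moreover have "(\<lambda>i. (i,1)) ` ?A \<subseteq> X" by blast
    ultimately have "card ((\<lambda>i. (i,1::nat)) ` ?A) \<le> gf2_rank comp_grid_adj X Y"
      using rank_ge fX by blast
    moreover have "card ((\<lambda>i. (i,1::nat)) ` ?A) = card ?A" by (rule card_image) (simp add: inj_on_def)
    ultimately show ?thesis by simp
  qed
  have cB: "card ?B \<le> gf2_rank comp_grid_adj X Y"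
  proof -
    have "gf2_rows_indep comp_grid_adj ((\<lambda>i. (i,c i)) ` ?B) Y"
    proof (rule tri_max[where y = "\<lambda>i. (i, 1)"])
      show "finite ?B" using fMR by simp
      show "\<forall>i\<in>?B. (i, 1) \<in> Y"
      proof
        fix i assume i: "i \<in> ?B"
        then have "i \<in> {1..n}" unfolding MR_def by blast
        then show "(i, 1) \<in> Y" using i unfolding Y_def comp_grid_V_def by auto
      qed
      show "\<forall>i\<in>?B. comp_grid_adj (i, c i) (i, 1)"
      proof
        fix i assume i: "i \<in> ?B"
        then have "(i, c i) \<in> X" "c i \<ge> 1" using c by auto
        then have "c i \<noteq> 1" using i by auto
        then show "comp_grid_adj (i, c i) (i, 1)" using \<open>c i \<ge> 1\<close> unfolding comp_grid_adj_def by auto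
      qed
      show "\<forall>s\<in>?B. \<forall>t\<in>?B. s < t \<longrightarrow> \<not> comp_grid_adj (s, c s) (t, 1)"
      proof (intro ballI impI)
        fix s t assume st: "s \<in> ?B" "t \<in> ?B" "s < t"
        then have "(s, c s) \<in> X" "c s \<ge> 1" using c by auto
        then have "c s \<noteq> 1" using st by auto
        then show "\<not> comp_grid_adj (s, c s) (t, 1)" using st(3) \<open>c s \<ge> 1\<close>
          unfolding comp_grid_adj_def by auto
      qed
    qed
    moreover have "(\<lambda>i. (i,c i)) ` ?B \<subseteq> X" using c by blast
    ultimately have "card ((\<lambda>i. (i,c i)) ` ?B) \<le> gf2_rank comp_grid_adj X Y"
      using rank_ge fX by blast
    moreover have "card ((\<lambda>i. (i,c i)) ` ?B) = card ?B" by (rule card_image) (simp add: inj_on_def)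
    ultimately show ?thesis by simp
  qed
  show ?thesis using cMR cA cB by linarith
qed

lemma cols_case:
  fixes n :: nat and X :: "(nat \<times> nat) set"
  defines "Y \<equiv> comp_grid_V n - X"
  assumes XV: "X \<subseteq> comp_grid_V n"
  defines "MC \<equiv> {i\<in>{1..n}. (\<exists>j\<in>{1..n}. (j,i) \<in> X) \<and> (\<exists>j\<in>{1..n}. (j,i) \<in> Y)}"
  shows "card MC \<le> 2 * gf2_rank comp_grid_adj X Y"
proof -
  have fX: "finite X" using XV finV finite_subset by blast
  have fMC: "finite MC" unfolding MC_def by simp
  let ?A = "{i\<in>MC. (1,i) \<in> X}"
  let ?B = "{i\<in>MC. (1,i) \<notin> X}"
  have MCAB: "MC = ?A \<union> ?B" by blast
  have cMC: "card MC \<le> card ?A + card ?B" by (subst MCAB) (rule card_Un_le)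
  define r where "r i = (SOME j. j \<in> {1..n} \<and> (j,i) \<in> Y)" for i
  have r: "r i \<in> {1..n} \<and> (r i, i) \<in> Y" if "i \<in> MC" for i
    unfolding r_def by (rule someI_ex) (use that MC_def in blast)
  define c where "c i = (SOME j. j \<in> {1..n} \<and> (j,i) \<in> X)" for i
  have c: "c i \<in> {1..n} \<and> (c i, i) \<in> X" if "i \<in> MC" for i
    unfolding c_def by (rule someI_ex) (use that MC_def in blast)
  have cA: "card ?A \<le> gf2_rank comp_grid_adj X Y"
  proof -
    have "gf2_rows_indep comp_grid_adj ((\<lambda>i. (1,i)) ` ?A) Y"
    proof (rule tri_min[where y = "\<lambda>i. (r i, i)"])
      show "finite ?A" using fMC by simp
      show "\<forall>i\<in>?A. (r i, i) \<in> Y" using r by blast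
      show "\<forall>i\<in>?A. comp_grid_adj (1, i) (r i, i)"
      proof
        fix i assume i: "i \<in> ?A"
        then have "(r i, i) \<in> Y" "r i \<ge> 1" using r by auto
        then have "r i \<noteq> 1" using i unfolding Y_def by auto
        then show "comp_grid_adj (1, i) (r i, i)" using \<open>r i \<ge> 1\<close> unfolding comp_grid_adj_def by auto
      qed
      show "\<forall>s\<in>?A. \<forall>t\<in>?A. t < s \<longrightarrow> \<not> comp_grid_adj (1, s) (r t, t)"
      proof (intro ballI impI)
        fix s t assume st: "s \<in> ?A" "t \<in> ?A" "t < s"
        then have "(r t, t) \<in> Y" "r t \<ge> 1" using r by auto
        then have "r t \<noteq> 1" using st unfolding Y_def by auto
        then show "\<not> comp_grid_adj (1, s) (r t, t)" using st(3) \<open>r t \<ge> 1\<close>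
          unfolding comp_grid_adj_def by auto
      qed
    qed
    moreover have "(\<lambda>i. (1,i)) ` ?A \<subseteq> X" by blast
    ultimately have "card ((\<lambda>i. (1::nat,i)) ` ?A) \<le> gf2_rank comp_grid_adj X Y"
      using rank_ge fX by blast
    moreover have "card ((\<lambda>i. (1::nat,i)) ` ?A) = card ?A" by (rule card_image) (simp add: inj_on_def)
    ultimately show ?thesis by simp
  qed
  have cB: "card ?B \<le> gf2_rank comp_grid_adj X Y"
  proof -
    have "gf2_rows_indep comp_grid_adj ((\<lambda>i. (c i,i)) ` ?B) Y"
    proof (rule tri_max[where y = "\<lambda>i. (1, i)"])
      show "finite ?B" using fMC by simp
      show "\<forall>i\<in>?B. (1, i) \<in> Y"
      proof
        fix i assume i: "i \<in> ?B"
        then have "i \<in> {1..n}" unfolding MC_def by blast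
        then show "(1, i) \<in> Y" using i unfolding Y_def comp_grid_V_def by auto
      qed
      show "\<forall>i\<in>?B. comp_grid_adj (c i, i) (1, i)"
      proof
        fix i assume i: "i \<in> ?B"
        then have "(c i, i) \<in> X" "c i \<ge> 1" using c by auto
        then have "c i \<noteq> 1" using i by auto
        then show "comp_grid_adj (c i, i) (1, i)" using \<open>c i \<ge> 1\<close> unfolding comp_grid_adj_def by auto
      qed
      show "\<forall>s\<in>?B. \<forall>t\<in>?B. s < t \<longrightarrow> \<not> comp_grid_adj (c s, s) (1, t)"
      proof (intro ballI impI)
        fix s t assume st: "s \<in> ?B" "t \<in> ?B" "s < t"
        then have "(c s, s) \<in> X" "c s \<ge> 1" using c by auto
        then have "c s \<noteq> 1" using st by auto
        then show "\<not> comp_grid_adj (c s, s) (1, t)" using st(3) \<open>c s \<ge> 1\<close>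
          unfolding comp_grid_adj_def by auto
      qed
    qed
    moreover have "(\<lambda>i. (c i,i)) ` ?B \<subseteq> X" using c by blast
    ultimately have "card ((\<lambda>i. (c i,i)) ` ?B) \<le> gf2_rank comp_grid_adj X Y"
      using rank_ge fX by blast
    moreover have "card ((\<lambda>i. (c i,i)) ` ?B) = card ?B" by (rule card_image) (simp add: inj_on_def)
    ultimately show ?thesis by simp
  qed
  show ?thesis using cMC cA cB by linarith
qed

lemma grid_cut:
  fixes n :: nat and X :: "(nat \<times> nat) set"
  assumes XV: "X \<subseteq> comp_grid_V n"
    and bX: "n * n \<le> 3 * card X" and bY: "n * n \<le> 3 * card (comp_grid_V n - X)"
  shows "n \<le> 4 * gf2_rank comp_grid_adj X (comp_grid_V n - X)"
proof -
  define Y where "Y = comp_grid_V n - X"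
  define MR where "MR = {i\<in>{1..n}. (\<exists>j\<in>{1..n}. (i,j) \<in> X) \<and> (\<exists>j\<in>{1..n}. (i,j) \<in> Y)}"
  define MC where "MC = {i\<in>{1..n}. (\<exists>j\<in>{1..n}. (j,i) \<in> X) \<and> (\<exists>j\<in>{1..n}. (j,i) \<in> Y)}"
  have R: "card MR \<le> 2 * gf2_rank comp_grid_adj X Y"
    using rows_case[OF XV] unfolding MR_def Y_def by simp
  have C: "card MC \<le> 2 * gf2_rank comp_grid_adj X Y"
    using cols_case[OF XV] unfolding MC_def Y_def by simp
  have fMR: "finite MR" "finite MC" unfolding MR_def MC_def by simp_all
  have Vm: "(i,j) \<in> comp_grid_V n \<longleftrightarrow> i \<in> {1..n} \<and> j \<in> {1..n}" for i j
    unfolding comp_grid_V_def by simp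
  have "n \<le> 2 * card MR \<or> n \<le> 2 * card MC"
  proof (rule ccontr)
    assume "\<not> ?thesis"
    then have p: "2 * card MR < n" and q: "2 * card MC < n" by auto
    have "MR \<noteq> {1..n}"
    proof
      assume "MR = {1..n}"
      then have "card MR = n" by simp
      then show False using p by simp
    qed
    moreover have "MR \<subseteq> {1..n}" unfolding MR_def by blast
    ultimately obtain i0 where i0: "i0 \<in> {1..n}" "i0 \<notin> MR" by blast
    have "MC \<noteq> {1..n}"
    proof
      assume "MC = {1..n}"
      then have "card MC = n" by simp
      then show False using q by simp
    qed
    moreover have "MC \<subseteq> {1..n}" unfolding MC_def by blast
    ultimately obtain j0 where j0: "j0 \<in> {1..n}" "j0 \<notin> MC" by blast
    have key: "4 * (card MR * card MC) < n * n"
    proof -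
      have "(2 * card MR) * (2 * card MC) < n * n"
        using p q by (intro mult_strict_mono) auto
      then show ?thesis by simp
    qed
    show False
    proof (cases "(i0,j0) \<in> X")
      case True
      have rowX: "(i0,j) \<in> X" if "j \<in> {1..n}" for j
        using i0 True j0 that unfolding MR_def Y_def Vm by (auto simp: Vm)
      have colX: "(i,j0) \<in> X" if "i \<in> {1..n}" for i
        using j0 True i0 that unfolding MC_def Y_def by (auto simp: Vm)
      have "Y \<subseteq> MR \<times> MC"
      proof
        fix z assume z: "z \<in> Y"
        obtain i j where ij: "z = (i,j)" by fastforce
        have ij1: "i \<in> {1..n}" "j \<in> {1..n}" using z ij unfolding Y_def by (auto simp: Vm)
        have "i \<in> MR" unfolding MR_def using ij1 colX[OF ij1(1)] j0(1) z ij by blast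
        moreover have "j \<in> MC" unfolding MC_def using ij1 rowX[OF ij1(2)] i0(1) z ij by blast
        ultimately show "z \<in> MR \<times> MC" using ij by simp
      qed
      then have "card Y \<le> card (MR \<times> MC)" using fMR by (intro card_mono) simp_all
      then have "card Y \<le> card MR * card MC" by (simp add: card_cartesian_product)
      then show False using bY key unfolding Y_def by linarith
    next
      case False
      have rowY: "(i0,j) \<notin> X" if "j \<in> {1..n}" for j
        using i0 False j0 that unfolding MR_def Y_def by (auto simp: Vm)
      have colY: "(i,j0) \<notin> X" if "i \<in> {1..n}" for i
        using j0 False i0 that unfolding MC_def Y_def by (auto simp: Vm)
      have "X \<subseteq> MR \<times> MC"
      proof
        fix z assume z: "z \<in> X"
        obtain i j where ij: "z = (i,j)" by fastforce
        have ij1: "i \<in> {1..n}" "j \<in> {1..n}" using z ij XV by (auto simp: Vm)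
        have "(i,j0) \<in> Y" using colY[OF ij1(1)] ij1 j0(1) unfolding Y_def by (auto simp: Vm)
        then have "i \<in> MR" unfolding MR_def using ij1 j0(1) z ij by blast
        moreover have "(i0,j) \<in> Y" using rowY[OF ij1(2)] ij1 i0(1) unfolding Y_def by (auto simp: Vm)
        then have "j \<in> MC" unfolding MC_def using ij1 i0(1) z ij by blast
        ultimately show "z \<in> MR \<times> MC" using ij by simp
      qed
      then have "card X \<le> card (MR \<times> MC)" using fMR by (intro card_mono) simp_all
      then have "card X \<le> card MR * card MC" by (simp add: card_cartesian_product)
      then show False using bX key by linarith
    qed
  qed
  then show ?thesis using R C unfolding Y_def by linarith
qed


lemma decomp_bound:
  fixes n :: nat
  assumes n: "n \<ge> 1" and rd: "rank_decomp (comp_grid_V n) TV TE f"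
  shows "n \<le> 4 * decomp_width (comp_grid_V n) comp_grid_adj TV TE f"
proof -
  let ?V = "comp_grid_V n"
  have tree: "is_tree TV TE" and degs: "\<forall>t\<in>TV. tdeg TE t = 1 \<or> tdeg TE t = 3"
    and bij: "bij_betw f (leaves TV TE) ?V" using rd unfolding rank_decomp_def by auto
  have cV: "card ?V = n * n" unfolding comp_grid_V_def by (simp add: card_cartesian_product)
  have cL: "card (leaves TV TE) = n * n" using bij_betw_same_card[OF bij] cV by simp
  have "n \<noteq> 1" using not_one_leaf[OF tree degs] cL by auto
  then have n2: "n \<ge> 2" using n by simp
  then have "n * n \<ge> 2 * 1" by (intro mult_mono) auto
  then obtain u v where e: "{u,v} \<in> TE" and b1: "n * n \<le> 3 * card (lside TV TE u v)"
    and b2: "n * n \<le> 3 * card (leaves TV TE - lside TV TE u v)"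
    using balanced[OF tree degs cL[symmetric]] by auto
  let ?L = "lside TV TE u v"
  let ?X = "f ` ?L"
  have inj: "inj_on f (leaves TV TE)" using bij by (simp add: bij_betw_def)
  have Lsub: "?L \<subseteq> leaves TV TE" by (rule lside_leaves[OF tree degs])
  have XV: "?X \<subseteq> ?V" using bij Lsub by (auto simp: bij_betw_def)
  have cX: "card ?X = card ?L" using inj Lsub by (meson card_image inj_on_subset)
  have VX: "?V - ?X = f ` (leaves TV TE - ?L)"
    using inj_on_image_set_diff[OF inj _ Lsub] bij by (simp add: bij_betw_def)
  have cVX: "card (?V - ?X) = card (leaves TV TE - ?L)"
    unfolding VX using inj by (meson Diff_subset card_image inj_on_subset)
  have "n \<le> 4 * gf2_rank comp_grid_adj ?X (?V - ?X)"
    by (rule grid_cut[OF XV]) (use b1 b2 cX cVX in simp_all)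
  also have "gf2_rank comp_grid_adj ?X (?V - ?X) = edge_width ?V comp_grid_adj TV TE f u v"
    unfolding edge_width_def cut_rank_def lside_def ..
  also have "edge_width ?V comp_grid_adj TV TE f u v \<le> decomp_width ?V comp_grid_adj TV TE f"
  proof -
    let ?W = "{edge_width ?V comp_grid_adj TV TE f u v | u v. {u, v} \<in> TE}"
    have "?W \<subseteq> (\<lambda>p. edge_width ?V comp_grid_adj TV TE f (fst p) (snd p)) ` (TV \<times> TV)"
    proof
      fix w assume "w \<in> ?W"
      then obtain a b where "w = edge_width ?V comp_grid_adj TV TE f a b" "{a,b} \<in> TE" by blast
      moreover then have "a \<in> TV" "b \<in> TV" using edge_in[OF tree degs] by blast+
      ultimately show "w \<in> (\<lambda>p. edge_width ?V comp_grid_adj TV TE f (fst p) (snd p)) ` (TV \<times> TV)"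
        by force
    qed
    moreover have "finite (TV \<times> TV)" using finTV[OF tree degs] by simp
    ultimately have "finite ?W" using finite_subset by blast
    moreover have "edge_width ?V comp_grid_adj TV TE f u v \<in> ?W" using e by blast
    ultimately show ?thesis unfolding decomp_width_def by (rule Max_ge)
  qed
  finally show ?thesis by simp
qed

theorem mainTheorem9:
  fixes n :: nat
  assumes "n \<ge> 1"
  shows "enat n \<le> 4 * rank_width (comp_grid_V n) comp_grid_adj"
proof -
  define k where "k = (n + 3) div 4"
  have k: "n \<le> 4 * k" unfolding k_def by simp
  have "enat k \<le> rank_width (comp_grid_V n) comp_grid_adj"
    unfolding rank_width_def
  proof (rule INF_greatest)
    fix d assume "d \<in> {(TV, TE, f). rank_decomp (comp_grid_V n) TV TE f}"
    then obtain TV TE f where d: "d = (TV, TE, f)" "rank_decomp (comp_grid_V n) TV TE f" by blast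
    have "n \<le> 4 * decomp_width (comp_grid_V n) comp_grid_adj TV TE f"
      by (rule decomp_bound[OF assms d(2)])
    then have "k \<le> decomp_width (comp_grid_V n) comp_grid_adj TV TE f" unfolding k_def by simp
    then show "enat k \<le> enat (case d of (TV, TE, f) \<Rightarrow> decomp_width (comp_grid_V n) comp_grid_adj TV TE f)"
      using d by simp
  qed
  then have "4 * enat k \<le> 4 * rank_width (comp_grid_V n) comp_grid_adj"
    by (rule mult_left_mono) simp
  moreover have "enat n \<le> 4 * enat k" using k by (simp add: numeral_eq_enat)
  ultimately show ?thesis by (rule order_trans[rotated])
qed

end
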